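(* Let $C>0$ and let $\mathcal{T}$ be a set of $C$-nice $(k,p)$-trees, no two of which are identical. Then $$\mathrm{b}_k(p)^{1/p}\geq\frac{p}{e\cdot C^2}\,|\mathcal{T}|^{1/p}.$$
   Context: A $(k,p)$-tree is a rooted plane tree (children of each node ordered left to right) with exactly $p$ leaves, each at distance exactly $k+1$ from the root. Two $(k,p)$-trees are identical if one is obtained from the other by renaming vertices while preserving the root, adjacency, and the left-to-right order of children of every node. For a rooted tree $T$, $\mathrm{Tran}(T)=\prod_{u\in V(T)}|r_u|!$, where $|r_u|$ is the number of children of $u$; $T$ is $C$-nice if $\mathrm{Tran}(T)\leq C^p$. $\mathrm{b}_k(p)$ is the number of $k$-level partitions $(T_1,\dots,T_k)$ of $[p]$ ($T_1$ a partition of $[p]$ into nonempty parts, $T_i$ a refinement of $T_{i-1}$). *)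

theory Defs
  imports Complex_Main "HOL-Library.Disjoint_Sets"
begin

text \<open>Rooted plane trees: a node with an ordered list of children.
  Structural equality is exactly "identical" (isomorphism preserving root and child order).\<close>
datatype ptree = Node "ptree list"

fun children :: "ptree \<Rightarrow> ptree list" where
  "children (Node ts) = ts"

fun nleaves :: "ptree \<Rightarrow> nat" where
  "nleaves (Node []) = 1"
| "nleaves (Node ts) = sum_list (map nleaves ts)"

fun leaves_at :: "nat \<Rightarrow> ptree \<Rightarrow> bool" where
  "leaves_at d (Node []) = (d = 0)"
| "leaves_at d (Node ts) = (0 < d \<and> (\<forall>c\<in>set ts. leaves_at (d - 1) c))"

definition kp_tree :: "nat \<Rightarrow> nat \<Rightarrow> ptree \<Rightarrow> bool" where
  "kp_tree k p t \<longleftrightarrow> nleaves t = p \<and> leaves_at (k + 1) t"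

fun tran :: "ptree \<Rightarrow> nat" where
  "tran (Node ts) = fact (length ts) * prod_list (map tran ts)"

definition C_nice :: "real \<Rightarrow> nat \<Rightarrow> ptree \<Rightarrow> bool" where
  "C_nice C p t \<longleftrightarrow> real (tran t) \<le> C ^ p"

text \<open>b_k(p): number of k-level partitions (T_1,...,T_k) of [p] = {1..p},
  T_1 a partition into nonempty parts, T_(i+1) refining T_i.
  The list index i corresponds to T_(i+1).\<close>
definition b :: "nat \<Rightarrow> nat \<Rightarrow> nat" where
  "b k p = card {Ts :: nat set set list. length Ts = k
      \<and> (\<forall>i<k. partition_on {1..p} (Ts ! i))
      \<and> (\<forall>i. Suc i < k \<longrightarrow> (\<forall>B\<in>Ts ! Suc i. \<exists>A\<in>Ts ! i. B \<subseteq> A))}"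

end

theory Submission
  imports Defs "HOL-Combinatorics.Multiset_Permutations" "HOL-Library.FuncSet"
begin

fun splitl :: "ptree list \<Rightarrow> 'a list \<Rightarrow> 'a list list" where
  "splitl [] xs = []"
| "splitl (t # ts) xs = take (nleaves t) xs # splitl ts (drop (nleaves t) xs)"

primrec lev :: "nat \<Rightarrow> ptree \<Rightarrow> 'a list \<Rightarrow> 'a set set" where
  "lev 0 t xs = {set xs}"
| "lev (Suc i) t xs = (\<Union>j<length (children t). lev i (children t ! j) (splitl (children t) xs ! j))"

lemma length_splitl[simp]: "length (splitl ts xs) = length ts"
  by (induction ts arbitrary: xs) auto

lemma splitl_props:
  "length xs = sum_list (map nleaves ts) \<Longrightarrow>
    concat (splitl ts xs) = xs \<and> (\<forall>j<length ts. length (splitl ts xs ! j) = nleaves (ts ! j))"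
proof (induction ts arbitrary: xs)
  case Nil
  then show ?case by simp
next
  case (Cons t ts)
  have "length (drop (nleaves t) xs) = sum_list (map nleaves ts)" using Cons.prems by simp
  from Cons.IH[OF this] Cons.prems show ?case
    by (auto simp: nth_Cons split: nat.splits)
qed

lemma nleaves_pos: "nleaves t \<ge> 1"
proof (induction t)
  case (Node ts)
  show ?case
  proof (cases ts)
    case Nil then show ?thesis by simp
  next
    case (Cons c cs)
    then have "nleaves c \<ge> 1" using Node by simp
    then show ?thesis using Cons by simp
  qed
qed

lemma nleaves_Node: "ts \<noteq> [] \<Longrightarrow> nleaves (Node ts) = sum_list (map nleaves ts)"
  by (cases ts) auto

lemma leaves_at_Node: "leaves_at (Suc d) (Node ts) \<longleftrightarrow> ts \<noteq> [] \<and> (\<forall>c\<in>set ts. leaves_at d c)"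
  by (cases ts) auto

lemma leaves_at_0: "leaves_at 0 t \<longleftrightarrow> t = Node []"
  by (cases t; rename_tac ts; case_tac ts) auto

lemma tran_pos: "tran t \<ge> 1"
proof (induction t)
  case (Node ts)
  have "prod_list (map tran ts) \<ge> 1"
    using Node by (induction ts) (auto simp: one_le_mult_iff)
  moreover have "fact (length ts) \<ge> (1::nat)" by (simp add: fact_ge_1)
  ultimately show ?case by (simp add: one_le_mult_iff)
qed

lemma distinct_concat_nth:
  assumes "distinct (concat xss)" "\<forall>xs\<in>set xss. xs \<noteq> []" "i < length xss" "j < length xss" "i \<noteq> j"
  shows "set (xss ! i) \<inter> set (xss ! j) = {}"
proof -
  have "removeAll [] xss = xss" using assms(2) by (induction xss) auto
  then have "distinct xss" using assms(1) distinct_concat_iff by metis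
  then have "xss ! i \<noteq> xss ! j" using assms by (simp add: nth_eq_iff_index_eq)
  then show ?thesis using assms(1,3,4) distinct_concat_iff by (metis nth_mem)
qed


lemma set_concat_nth: "set (concat xss) = (\<Union>j<length xss. set (xss ! j))"
proof -
  have "set xss = (\<lambda>j. xss ! j) ` {..<length xss}" by (auto simp: in_set_conv_nth image_def)
  then show ?thesis by (simp add: set_concat image_image)
qed

definition valid :: "nat \<Rightarrow> ptree \<Rightarrow> 'a list \<Rightarrow> bool" where
  "valid d t xs \<longleftrightarrow> leaves_at d t \<and> length xs = nleaves t \<and> distinct xs"

lemma valid_Suc:
  assumes "valid (Suc d) (Node ts) xs"
  shows "ts \<noteq> []" "concat (splitl ts xs) = xs"
    "\<And>j. j<length ts \<Longrightarrow> valid d (ts ! j) (splitl ts xs ! j)"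
    "\<And>j. j<length ts \<Longrightarrow> splitl ts xs ! j \<noteq> []"
    "\<And>i j. i<length ts \<Longrightarrow> j<length ts \<Longrightarrow> i \<noteq> j \<Longrightarrow> set (splitl ts xs ! i) \<inter> set (splitl ts xs ! j) = {}"
proof -
  have ne: "ts \<noteq> []" and la: "\<forall>c\<in>set ts. leaves_at d c"
    using assms by (auto simp: valid_def leaves_at_Node)
  have len: "length xs = sum_list (map nleaves ts)" using assms ne by (simp add: valid_def nleaves_Node)
  note sp = splitl_props[OF len]
  have dist: "distinct (concat (splitl ts xs))" using sp assms by (simp add: valid_def)
  have nonempty: "\<forall>j<length ts. splitl ts xs ! j \<noteq> []"
    using sp nleaves_pos by (metis One_nat_def length_0_conv not_one_le_zero)
  have nonempty2: "\<forall>ys\<in>set (splitl ts xs). ys \<noteq> []"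
    using nonempty by (metis in_set_conv_nth length_splitl)
  have dj: "\<forall>i<length ts. \<forall>j<length ts. i \<noteq> j \<longrightarrow> set (splitl ts xs ! i) \<inter> set (splitl ts xs ! j) = {}"
    using distinct_concat_nth[OF dist nonempty2] by simp
  have "\<forall>j<length ts. valid d (ts ! j) (splitl ts xs ! j)"
    using sp la dist unfolding valid_def
    by (metis distinct_concat_iff length_splitl nth_mem)
  then show "\<And>j. j<length ts \<Longrightarrow> valid d (ts ! j) (splitl ts xs ! j)" by blast
  show "ts \<noteq> []" "concat (splitl ts xs) = xs" using ne sp by auto
  show "\<And>j. j<length ts \<Longrightarrow> splitl ts xs ! j \<noteq> []" using nonempty by blast
  show "\<And>i j. i<length ts \<Longrightarrow> j<length ts \<Longrightarrow> i \<noteq> j \<Longrightarrow> set (splitl ts xs ! i) \<inter> set (splitl ts xs ! j) = {}"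
    using dj by blast
qed

lemma lev_partition:
  "valid d t xs \<Longrightarrow> i \<le> d \<Longrightarrow> partition_on (set xs) (lev i t xs)"
proof (induction i arbitrary: d t xs)
  case 0
  then have "xs \<noteq> []" using nleaves_pos[of t] by (auto simp: valid_def)
  then show ?case by (simp add: partition_on_space)
next
  case (Suc i)
  obtain ts where t: "t = Node ts" by (cases t)
  obtain d' where d: "d = Suc d'" using Suc.prems by (cases d) auto
  note V = valid_Suc[OF Suc.prems(1)[unfolded t d]]
  define xss where "xss = splitl ts xs"
  have P: "\<And>j. j < length ts \<Longrightarrow> partition_on (set (xss ! j)) (lev i (ts ! j) (xss ! j))"
    unfolding xss_def using Suc.prems(2) d by (intro Suc.IH[OF V(3)]) auto
  have L: "lev (Suc i) t xs = (\<Union>j<length ts. lev i (ts ! j) (xss ! j))"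
    by (simp add: t xss_def)
  show ?case unfolding L
  proof (rule partition_onI)
    have "\<Union> (\<Union>j<length ts. lev i (ts ! j) (xss ! j)) = (\<Union>j<length ts. \<Union> (lev i (ts ! j) (xss ! j)))"
      by auto
    also have "\<dots> = (\<Union>j<length ts. set (xss ! j))"
    proof (intro SUP_cong refl)
      fix j assume "j \<in> {..<length ts}"
      then show "\<Union> (lev i (ts ! j) (xss ! j)) = set (xss ! j)"
        using partition_onD1[OF P] by simp
    qed
    also have "\<dots> = set (concat xss)"
      by (simp only: set_concat_nth xss_def length_splitl)
    also have "\<dots> = set xs" using V(2) xss_def by simp
    finally show "\<Union> (\<Union>j<length ts. lev i (ts ! j) (xss ! j)) = set xs" .
  next
    fix p q assume "p \<in> (\<Union>j<length ts. lev i (ts ! j) (xss ! j))" "q \<in> (\<Union>j<length ts. lev i (ts ! j) (xss ! j))" "p \<noteq> q"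
    then obtain j j' where j: "j < length ts" "p \<in> lev i (ts ! j) (xss ! j)"
      and j': "j' < length ts" "q \<in> lev i (ts ! j') (xss ! j')" by blast
    show "disjnt p q"
    proof (cases "j = j'")
      case True
      then show ?thesis using partition_onD2[OF P[OF j(1)]] j(2) j'(2) \<open>p \<noteq> q\<close>
        by (simp add: pairwiseD)
    next
      case False
      have "p \<subseteq> set (xss ! j)"
        using j(2) partition_onD1[OF P[OF j(1)]] by (simp add: Union_upper)
      moreover have "q \<subseteq> set (xss ! j')"
        using j'(2) partition_onD1[OF P[OF j'(1)]] by (simp add: Union_upper)
      moreover have "set (xss ! j) \<inter> set (xss ! j') = {}" using V(5)[OF j(1) j'(1) False] xss_def by simp
      ultimately show ?thesis unfolding disjnt_def by blast
    qed
  next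
    show "{} \<notin> (\<Union>j<length ts. lev i (ts ! j) (xss ! j))"
    proof
      assume "{} \<in> (\<Union>j<length ts. lev i (ts ! j) (xss ! j))"
      then obtain j where "j < length ts" "{} \<in> lev i (ts ! j) (xss ! j)" by blast
      then show False using partition_onD3[OF P] by blast
    qed
  qed
qed

lemma lev_refine:
  "valid d t xs \<Longrightarrow> Suc i \<le> d \<Longrightarrow> B \<in> lev (Suc i) t xs \<Longrightarrow> \<exists>A\<in>lev i t xs. B \<subseteq> A"
proof (induction i arbitrary: d t xs B)
  case 0
  have "partition_on (set xs) (lev (Suc 0) t xs)" using lev_partition[OF 0(1) 0(2)] .
  then have "B \<subseteq> set xs" using 0(3) partition_onD1 by blast
  then show ?case by simp
next
  case (Suc i)
  obtain ts where t: "t = Node ts" by (cases t)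
  obtain d' where d: "d = Suc d'" using Suc.prems by (cases d) auto
  note V = valid_Suc[OF Suc.prems(1)[unfolded t d]]
  from Suc.prems(3) obtain j where j: "j < length ts" "B \<in> lev (Suc i) (ts ! j) (splitl ts xs ! j)"
    by (auto simp: t)
  have vj: "valid d' (ts ! j) (splitl ts xs ! j)" using V(3) j(1) by blast
  have id: "Suc i \<le> d'" using Suc.prems(2) d by simp
  obtain A where A: "A \<in> lev i (ts ! j) (splitl ts xs ! j)" "B \<subseteq> A"
    using Suc.IH[OF vj id j(2)] by blast
  have "A \<in> lev (Suc i) t xs" unfolding t lev.simps children.simps
    using A(1) j(1) by (intro UN_I[of j]) auto
  then show ?case using A(2) by (intro bexI[of _ A])
qed

lemma lev_bottom:
  "valid d t xs \<Longrightarrow> lev d t xs = (\<lambda>x. {x}) ` set xs"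
proof (induction d arbitrary: t xs)
  case 0
  then have "t = Node []" by (simp add: valid_def leaves_at_0)
  then have "length xs = 1" using 0 by (simp add: valid_def)
  then obtain x where "xs = [x]" by (metis One_nat_def length_0_conv length_Suc_conv)
  then show ?case by simp
next
  case (Suc d)
  obtain ts where t: "t = Node ts" by (cases t)
  note V = valid_Suc[OF Suc.prems(1)[unfolded t]]
  have c: "concat (splitl ts xs) = xs" using V(2) .
  have IH: "\<And>j. j < length ts \<Longrightarrow> lev d (ts ! j) (splitl ts xs ! j) = (\<lambda>x. {x}) ` set (splitl ts xs ! j)"
    using Suc.IH V(3) by blast
  have "lev (Suc d) t xs = (\<Union>j<length ts. (\<lambda>x. {x}) ` set (splitl ts xs ! j))"
    unfolding t lev.simps children.simps using IH by (intro SUP_cong) auto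
  also have "\<dots> = (\<lambda>x. {x}) ` (\<Union>j<length (splitl ts xs). set (splitl ts xs ! j))"
    by (simp add: image_UN)
  also have "\<dots> = (\<lambda>x. {x}) ` set (concat (splitl ts xs))"
    by (simp only: set_concat_nth)
  finally show ?case unfolding c .
qed


lemma lev_child:
  assumes V: "valid (Suc d) (Node ts) xs" and l: "l \<le> d" and j: "j < length ts"
  shows "lev l (ts ! j) (splitl ts xs ! j) = {B \<in> lev (Suc l) (Node ts) xs. B \<subseteq> set (splitl ts xs ! j)}"
proof
  note VS = valid_Suc[OF V]
  have P: "\<And>j. j < length ts \<Longrightarrow> partition_on (set (splitl ts xs ! j)) (lev l (ts ! j) (splitl ts xs ! j))"
    using lev_partition VS(3) l by blast
  show "lev l (ts ! j) (splitl ts xs ! j) \<subseteq> {B \<in> lev (Suc l) (Node ts) xs. B \<subseteq> set (splitl ts xs ! j)}"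
  proof
    fix B assume B: "B \<in> lev l (ts ! j) (splitl ts xs ! j)"
    have "B \<subseteq> set (splitl ts xs ! j)" using B partition_onD1[OF P[OF j]] by (simp add: Union_upper)
    moreover have "B \<in> lev (Suc l) (Node ts) xs" using B j by (simp only: lev.simps children.simps) blast
    ultimately show "B \<in> {B \<in> lev (Suc l) (Node ts) xs. B \<subseteq> set (splitl ts xs ! j)}" by blast
  qed
  show "{B \<in> lev (Suc l) (Node ts) xs. B \<subseteq> set (splitl ts xs ! j)} \<subseteq> lev l (ts ! j) (splitl ts xs ! j)"
  proof
    fix B assume "B \<in> {B \<in> lev (Suc l) (Node ts) xs. B \<subseteq> set (splitl ts xs ! j)}"
    then have B1: "B \<in> lev (Suc l) (Node ts) xs" and B2: "B \<subseteq> set (splitl ts xs ! j)" by auto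
    from B1 obtain j' where j': "j' < length ts" "B \<in> lev l (ts ! j') (splitl ts xs ! j')"
      by (simp only: lev.simps children.simps) blast
    show "B \<in> lev l (ts ! j) (splitl ts xs ! j)"
    proof (cases "j' = j")
      case True then show ?thesis using j' by simp
    next
      case False
      have "B \<subseteq> set (splitl ts xs ! j')" using j'(2) partition_onD1[OF P[OF j'(1)]] by (simp add: Union_upper)
      then have "B = {}" using B2 VS(5)[OF j j'(1)] False by blast
      then show ?thesis using j'(2) partition_onD3[OF P[OF j'(1)]] by simp
    qed
  qed
qed

lemma lev_one:
  "lev (Suc 0) (Node ts) xs = (\<lambda>j. set (splitl ts xs ! j)) ` {..<length ts}"
  by auto

lemma inj_sets:
  assumes V: "valid (Suc d) (Node ts) xs"
  shows "inj_on (\<lambda>j. set (splitl ts xs ! j)) {..<length ts}"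
proof (rule inj_onI)
  note VS = valid_Suc[OF V]
  fix i j assume i: "i \<in> {..<length ts}" and j: "j \<in> {..<length ts}"
    and eq: "set (splitl ts xs ! i) = set (splitl ts xs ! j)"
  show "i = j"
  proof (rule ccontr)
    assume "i \<noteq> j"
    then have "set (splitl ts xs ! i) = {}" using VS(5)[of i j] i j eq by auto
    then show False using VS(4)[of i] i by simp
  qed
qed

definition E :: "nat \<Rightarrow> ptree \<Rightarrow> 'a list \<Rightarrow> (ptree \<times> 'a list) set" where
  "E d t xs = {(t', xs'). valid d t' xs' \<and> (\<forall>i\<le>d. lev i t' xs' = lev i t xs)}"

lemma E_incl:
  assumes V: "valid (Suc d) (Node ts) xs"
  defines "m \<equiv> length ts"
  shows "E (Suc d) (Node ts) xs \<subseteq>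
    (\<lambda>(\<pi>, z). (Node (map (\<lambda>j. fst (z j)) \<pi>), concat (map (\<lambda>j. snd (z j)) \<pi>))) `
      (permutations_of_set {..<m} \<times> (\<Pi>\<^sub>E i\<in>{..<m}. E d (ts ! i) (splitl ts xs ! i)))"
proof
  fix a assume "a \<in> E (Suc d) (Node ts) xs"
  then obtain t' xs' where a: "a = (t', xs')" and V': "valid (Suc d) t' xs'"
    and eqlev: "\<And>i. i \<le> Suc d \<Longrightarrow> lev i t' xs' = lev i (Node ts) xs"
    unfolding E_def by auto
  obtain ts' where t': "t' = Node ts'" by (cases t')
  note VS = valid_Suc[OF V]
  note VS' = valid_Suc[OF V'[unfolded t']]
  define F where "F = (\<lambda>j. set (splitl ts xs ! j))"
  define G where "G = (\<lambda>j. set (splitl ts' xs' ! j))"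
  have injF: "inj_on F {..<m}" unfolding F_def m_def using inj_sets[OF V] .
  have injG: "inj_on G {..<length ts'}" unfolding G_def using inj_sets[OF V'[unfolded t']] .
  have FG: "G ` {..<length ts'} = F ` {..<m}"
    using eqlev[of "Suc 0"] unfolding t' F_def G_def m_def lev_one by simp
  have mm: "length ts' = m"
    using card_image[OF injF] card_image[OF injG] FG by simp
  define \<sigma> where "\<sigma> = (\<lambda>j. the_inv_into {..<m} F (G j))"
  have GF: "\<And>j. j < m \<Longrightarrow> G j \<in> F ` {..<m}"
  proof -
    fix j assume "j < m"
    then have "G j \<in> G ` {..<length ts'}" using mm by simp
    then show "G j \<in> F ` {..<m}" using FG by simp
  qed
  have \<sigma>F: "\<And>j. j < m \<Longrightarrow> F (\<sigma> j) = G j"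
    unfolding \<sigma>_def using f_the_inv_into_f[OF injF GF] by simp
  have \<sigma>m: "\<And>j. j < m \<Longrightarrow> \<sigma> j < m"
    unfolding \<sigma>_def using the_inv_into_into[OF injF GF, of _ "{..<m}"] by simp
  have inj\<sigma>: "inj_on \<sigma> {..<m}"
  proof (rule inj_onI)
    fix i j assume "i \<in> {..<m}" "j \<in> {..<m}" "\<sigma> i = \<sigma> j"
    then have "G i = G j" using \<sigma>F[of i] \<sigma>F[of j] by simp
    then show "i = j" using injG mm \<open>i \<in> {..<m}\<close> \<open>j \<in> {..<m}\<close> by (simp add: inj_on_def)
  qed
  have im\<sigma>: "\<sigma> ` {..<m} = {..<m}"
    by (rule endo_inj_surj) (use \<sigma>m inj\<sigma> in auto)
  define \<tau> where "\<tau> = the_inv_into {..<m} \<sigma>"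
  have \<tau>\<sigma>: "\<And>j. j < m \<Longrightarrow> \<tau> (\<sigma> j) = j"
    unfolding \<tau>_def using the_inv_into_f_f[OF inj\<sigma>] by simp
  have \<sigma>\<tau>: "\<And>i. i < m \<Longrightarrow> \<sigma> (\<tau> i) = i"
    unfolding \<tau>_def using f_the_inv_into_f[OF inj\<sigma>] im\<sigma> by simp
  have \<tau>m: "\<And>i. i < m \<Longrightarrow> \<tau> i < m"
    unfolding \<tau>_def using the_inv_into_into[OF inj\<sigma>, of _ "{..<m}"] im\<sigma> by auto
  define \<pi> where "\<pi> = map \<sigma> [0..<m]"
  define z where "z = restrict (\<lambda>i. (ts' ! \<tau> i, splitl ts' xs' ! \<tau> i)) {..<m}"
  have \<pi>perm: "\<pi> \<in> permutations_of_set {..<m}"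
    unfolding \<pi>_def permutations_of_set_def
    using im\<sigma> inj\<sigma> by (auto simp: distinct_map lessThan_atLeast0)
  have zPi: "z \<in> (\<Pi>\<^sub>E i\<in>{..<m}. E d (ts ! i) (splitl ts xs ! i))"
  proof (rule PiE_I)
    fix i assume i: "i \<in> {..<m}"
    define j where "j = \<tau> i"
    have j: "j < m" "\<sigma> j = i" using \<tau>m \<sigma>\<tau> i j_def by auto
    have vj: "valid d (ts' ! j) (splitl ts' xs' ! j)" using VS'(3) j mm by simp
    have "lev l (ts' ! j) (splitl ts' xs' ! j) = lev l (ts ! i) (splitl ts xs ! i)" if l: "l \<le> d" for l
    proof -
      have "lev l (ts' ! j) (splitl ts' xs' ! j) = {B \<in> lev (Suc l) (Node ts') xs'. B \<subseteq> G j}"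
        unfolding G_def using lev_child[OF V'[unfolded t'] l] j mm by (simp del: lev.simps)
      also have "\<dots> = {B \<in> lev (Suc l) (Node ts) xs. B \<subseteq> F i}"
        using eqlev[of "Suc l"] l \<sigma>F[OF j(1)] j(2) unfolding t' by (simp del: lev.simps)
      also have "\<dots> = lev l (ts ! i) (splitl ts xs ! i)"
        unfolding F_def using lev_child[OF V l] i m_def by (simp del: lev.simps)
      finally show ?thesis .
    qed
    then show "z i \<in> E d (ts ! i) (splitl ts xs ! i)"
      unfolding z_def E_def using i vj j_def by (simp del: lev.simps)
  next
    fix i assume "i \<notin> {..<m}" then show "z i = undefined" unfolding z_def by simp
  qed
  have zs: "\<And>j. j < m \<Longrightarrow> z (\<sigma> j) = (ts' ! j, splitl ts' xs' ! j)"
    unfolding z_def using \<sigma>m \<tau>\<sigma> by simp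
  have "map (\<lambda>j. fst (z j)) \<pi> = map (\<lambda>j. ts' ! j) [0..<m]"
    unfolding \<pi>_def using zs by simp
  also have "\<dots> = ts'" using mm map_nth by metis
  finally have e1: "map (\<lambda>j. fst (z j)) \<pi> = ts'" .
  have "map (\<lambda>j. snd (z j)) \<pi> = map (\<lambda>j. splitl ts' xs' ! j) [0..<m]"
    unfolding \<pi>_def using zs by simp
  also have "\<dots> = splitl ts' xs'" using mm map_nth length_splitl by metis
  finally have e2: "concat (map (\<lambda>j. snd (z j)) \<pi>) = xs'" using VS'(2) by simp
  show "a \<in> (\<lambda>(\<pi>, z). (Node (map (\<lambda>j. fst (z j)) \<pi>), concat (map (\<lambda>j. snd (z j)) \<pi>))) `
      (permutations_of_set {..<m} \<times> (\<Pi>\<^sub>E i\<in>{..<m}. E d (ts ! i) (splitl ts xs ! i)))"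
    using \<pi>perm zPi e1 e2 a t' by (intro image_eqI[of _ _ "(\<pi>, z)"]) auto
qed


lemma E_card:
  "valid d t xs \<Longrightarrow> finite (E d t xs) \<and> card (E d t xs) \<le> tran t"
proof (induction t arbitrary: d xs)
  case (Node ts)
  show ?case
  proof (cases "ts = []")
    case True
    then have d0: "d = 0" using Node.prems by (cases d) (auto simp: valid_def)
    have "E d (Node ts) xs \<subseteq> {(Node [], xs)}"
    proof
      fix a assume "a \<in> E d (Node ts) xs"
      then obtain t' xs' where a: "a = (t', xs')" "valid 0 t' xs'" "{set xs'} = {set xs}"
        unfolding E_def d0 by auto
      have t': "t' = Node []" using a(2) by (simp add: valid_def leaves_at_0)
      have l1: "length xs' = 1" using a(2) t' by (simp add: valid_def)
      have l2: "length xs = 1" using Node.prems True by (simp add: valid_def)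
      obtain x where x: "xs = [x]" using l2 by (metis One_nat_def length_0_conv length_Suc_conv)
      obtain y where y: "xs' = [y]" using l1 by (metis One_nat_def length_0_conv length_Suc_conv)
      have "xs' = xs" using a(3) x y by simp
      then show "a \<in> {(Node [], xs)}" using a t' by simp
    qed
    moreover have "tran (Node ts) = 1" using True by simp
    ultimately show ?thesis by (simp add: card_mono finite_subset) (metis card.empty card.insert card_mono empty_iff finite.emptyI finite.insertI le_SucI)
  next
    case False
    obtain d' where d: "d = Suc d'" using Node.prems False by (cases d) (auto simp: valid_def leaves_at_0)
    define m where "m = length ts"
    note V = Node.prems[unfolded d]
    note VS = valid_Suc[OF V]
    define S where "S = permutations_of_set {..<m} \<times> (\<Pi>\<^sub>E i\<in>{..<m}. E d' (ts ! i) (splitl ts xs ! i))"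
    define g :: "nat list \<times> (nat \<Rightarrow> ptree \<times> 'a list) \<Rightarrow> ptree \<times> 'a list"
      where "g = (\<lambda>(\<pi>, z). (Node (map (\<lambda>j. fst (z j)) \<pi>), concat (map (\<lambda>j. snd (z j)) \<pi>)))"
    have IH: "\<And>i. i < m \<Longrightarrow> finite (E d' (ts ! i) (splitl ts xs ! i)) \<and> card (E d' (ts ! i) (splitl ts xs ! i)) \<le> tran (ts ! i)"
      using Node.IH VS(3) m_def by simp
    have incl: "E d (Node ts) xs \<subseteq> g ` S"
      unfolding d S_def g_def m_def using E_incl[OF V] by simp
    have finS: "finite S" unfolding S_def using IH by (auto intro!: finite_PiE)
    have "card S = fact m * (\<Prod>i<m. card (E d' (ts ! i) (splitl ts xs ! i)))"
      unfolding S_def by (simp add: card_cartesian_product card_PiE)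
    also have "\<dots> \<le> fact m * (\<Prod>i<m. tran (ts ! i))"
      using IH by (intro mult_le_mono2 prod_mono) auto
    also have "\<dots> = tran (Node ts)"
      by (simp add: m_def prod.list_conv_set_nth lessThan_atLeast0)
    finally have cS: "card S \<le> tran (Node ts)" .
    have "finite (E d (Node ts) xs)" using incl finS finite_subset by blast
    moreover have "card (E d (Node ts) xs) \<le> card S"
      using incl finS by (meson card_image_le card_mono finite_imageI le_trans)
    ultimately show ?thesis using cS by simp
  qed
qed


definition bset :: "nat \<Rightarrow> nat \<Rightarrow> nat set set list set" where
  "bset k p = {Ts :: nat set set list. length Ts = k
      \<and> (\<forall>i<k. partition_on {1..p} (Ts ! i))
      \<and> (\<forall>i. Suc i < k \<longrightarrow> (\<forall>B\<in>Ts ! Suc i. \<exists>A\<in>Ts ! i. B \<subseteq> A))}"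

lemma b_bset: "b k p = card (bset k p)"
  unfolding b_def bset_def ..

lemma finite_bset: "finite (bset k p)"
proof (rule finite_subset)
  show "bset k p \<subseteq> {Ts. set Ts \<subseteq> Pow (Pow {1..p}) \<and> length Ts = k}"
  proof
    fix Ts assume Ts: "Ts \<in> bset k p"
    have "y \<in> Pow (Pow {1..p})" if "y \<in> set Ts" for y
    proof -
      obtain i where i: "i < length Ts" "y = Ts ! i" using \<open>y \<in> set Ts\<close> by (auto simp: in_set_conv_nth)
      then have "partition_on {1..p} y" using Ts unfolding bset_def by auto
      then show ?thesis using partition_onD1 by blast
    qed
    then show "Ts \<in> {Ts. set Ts \<subseteq> Pow (Pow {1..p}) \<and> length Ts = k}" using Ts unfolding bset_def by auto
  qed
  show "finite {Ts. set Ts \<subseteq> Pow (Pow {1..p}) \<and> length Ts = k}"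
    by (intro finite_lists_length_eq) auto
qed

lemma counting:
  fixes X :: real
  assumes fin: "finite \<T>"
    and T: "\<And>t. t \<in> \<T> \<Longrightarrow> kp_tree k p t \<and> real (tran t) \<le> X" and X0: "X \<ge> 0"
  shows "real (card \<T>) * fact p \<le> real (b k p) * X"
proof -
  define A where "A = \<T> \<times> permutations_of_set {1..p}"
  define f :: "ptree \<times> nat list \<Rightarrow> nat set set list"
    where "f = (\<lambda>(t, xs). map (\<lambda>i. lev (Suc i) t xs) [0..<k])"
  have finA: "finite A" unfolding A_def using fin by simp
  have cardA: "card A = card \<T> * fact p" unfolding A_def by (simp add: card_cartesian_product)
  have VA: "valid (Suc k) t xs \<and> set xs = {1..p}" if "(t, xs) \<in> A" for t xs
  proof -
    have "t \<in> \<T>" "set xs = {1..p}" "distinct xs" using that unfolding A_def permutations_of_set_def by auto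
    moreover have "length xs = p" using \<open>set xs = {1..p}\<close> \<open>distinct xs\<close> distinct_card by fastforce
    ultimately show ?thesis using T[of t] by (simp add: valid_def kp_tree_def)
  qed
  have fA: "f ` A \<subseteq> bset k p"
  proof
    fix P assume "P \<in> f ` A"
    then obtain t xs where a: "(t, xs) \<in> A" and P: "P = map (\<lambda>i. lev (Suc i) t xs) [0..<k]"
      unfolding f_def by auto
    note v = VA[OF a]
    have "partition_on {1..p} (P ! i)" if "i < k" for i
      using lev_partition[of "Suc k" t xs "Suc i"] v that P by simp
    moreover have "\<exists>A\<in>P ! i. B \<subseteq> A" if "Suc i < k" "B \<in> P ! Suc i" for i B
      using lev_refine[of "Suc k" t xs "Suc i" B] v that P by (simp del: lev.simps)
    ultimately show "P \<in> bset k p" unfolding bset_def using P by simp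
  qed
  have fib: "real (card {a \<in> A. f a = P}) \<le> X" if "P \<in> f ` A" for P
  proof -
    obtain t0 xs0 where a0: "(t0, xs0) \<in> A" and P: "P = f (t0, xs0)" using \<open>P \<in> f ` A\<close> by auto
    note v0 = VA[OF a0]
    have sub: "{a \<in> A. f a = P} \<subseteq> E (Suc k) t0 xs0"
    proof
      fix a assume "a \<in> {a \<in> A. f a = P}"
      moreover obtain t xs where "a = (t, xs)" by (cases a)
      ultimately have a: "a = (t, xs)" "(t, xs) \<in> A" "f (t, xs) = f (t0, xs0)" using P by auto
      note v = VA[OF a(2)]
      have "lev i t xs = lev i t0 xs0" if "i \<le> Suc k" for i
      proof (cases i)
        case 0 then show ?thesis using v v0 by simp
      next
        case (Suc i')
        show ?thesis
        proof (cases "i' < k")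
          case True
          have "f (t, xs) ! i' = f (t0, xs0) ! i'" using a(3) by (simp only:)
          then show ?thesis using True Suc unfolding f_def by (simp del: lev.simps)
        next
          case False
          then have "i = Suc k" using Suc that by simp
          then show ?thesis using lev_bottom[of "Suc k" t xs] lev_bottom[of "Suc k" t0 xs0] v v0 by simp
        qed
      qed
      then show "a \<in> E (Suc k) t0 xs0" unfolding E_def using a v by simp
    qed
    have "finite (E (Suc k) t0 xs0)" "card (E (Suc k) t0 xs0) \<le> tran t0" using E_card v0 by blast+
    then have "card {a \<in> A. f a = P} \<le> tran t0" using sub card_mono le_trans by blast
    moreover have "real (tran t0) \<le> X" using T a0 unfolding A_def by auto
    ultimately show ?thesis by linarith
  qed
  have "real (card A) = (\<Sum>P\<in>f ` A. real (card {a \<in> A. f a = P}))"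
    using sum.image_gen[OF finA, of "\<lambda>_. (1::real)" f] by simp
  also have "\<dots> \<le> (\<Sum>P\<in>f ` A. X)" using fib by (intro sum_mono) auto
  also have "\<dots> = real (card (f ` A)) * X" by simp
  also have "\<dots> \<le> real (b k p) * X"
  proof -
    have "card (f ` A) \<le> b k p" unfolding b_bset using card_mono[OF finite_bset fA] .
    then show ?thesis using X0 by (simp add: mult_right_mono)
  qed
  finally show ?thesis using cardA by simp
qed


lemma pow_le_fact: "(real p / exp 1) ^ p \<le> fact p"
proof -
  have sm: "(\<lambda>n. real p ^ n / fact n) sums exp (real p)"
    using exp_converges[of "real p"] by (simp add: divide_inverse_commute)
  have "real p ^ p / fact p \<le> (\<Sum>n. real p ^ n / fact n)"
    using sum_le_suminf[OF sums_summable[OF sm], of "{p}"] by simp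
  also have "\<dots> = exp (real p)" using sm sums_unique by metis
  finally have h: "real p ^ p / fact p \<le> exp (real p)" .
  have e: "exp (real p) = exp 1 ^ p" using exp_of_nat_mult[of p 1] by simp
  have "(real p / exp 1) ^ p = real p ^ p / exp (real p)" by (simp add: power_divide e)
  also have "\<dots> \<le> fact p" using h by (simp add: divide_le_eq field_simps)
  finally show ?thesis .
qed

theorem claim9p3:
  fixes C :: real and k p :: nat and \<T> :: "ptree set"
  assumes "C > 0"
    and "\<And>t. t \<in> \<T> \<Longrightarrow> kp_tree k p t \<and> C_nice C p t"
  shows "real (b k p) powr (1 / real p) \<ge> real p / (exp 1 * C ^ 2) * real (card \<T>) powr (1 / real p)"
proof (cases "p = 0 \<or> card \<T> = 0")
  case True
  then show ?thesis by auto
next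
  case False
  then have p: "p > 0" and N: "card \<T> > 0" by auto
  then have fin: "finite \<T>" and ne: "\<T> \<noteq> {}" using card_gt_0_iff by blast+
  obtain t where t: "t \<in> \<T>" using ne by blast
  have Cp1: "C ^ p \<ge> 1" using assms(2)[OF t] tran_pos[of t] unfolding C_nice_def by linarith
  have C1: "C \<ge> 1"
  proof (rule ccontr)
    assume "\<not> C \<ge> 1"
    then have "C ^ p < 1 ^ p" using power_strict_mono[of C 1 p] p assms(1) by simp
    then show False using Cp1 by simp
  qed
  have cnt: "real (card \<T>) * fact p \<le> real (b k p) * C ^ p"
    using counting[OF fin, of k p "C ^ p"] assms(2) assms(1) unfolding C_nice_def by auto
  define x where "x = real p / (exp 1 * C ^ 2)"
  have x0: "x > 0" unfolding x_def using p assms(1) by simp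
  have Cpp: "C ^ p > 0" using assms(1) by simp
  have "real (card \<T>) * x ^ p = real (card \<T>) * (real p / exp 1) ^ p / (C ^ p * C ^ p)"
  proof -
    have c2: "(C ^ 2) ^ p = C ^ p * C ^ p" by (simp add: power2_eq_square power_mult_distrib)
    have "x ^ p = (real p / exp 1) ^ p / (C ^ 2) ^ p"
      unfolding x_def by (simp add: power_divide power_mult_distrib)
    then show ?thesis using c2 by simp
  qed
  also have "\<dots> \<le> real (card \<T>) * fact p / (C ^ p * C ^ p)"
    using pow_le_fact[of p] Cpp by (intro divide_right_mono mult_left_mono) auto
  also have "\<dots> \<le> real (b k p) * C ^ p / (C ^ p * C ^ p)"
    using cnt Cpp by (intro divide_right_mono) auto
  also have "\<dots> = real (b k p) / C ^ p" using Cpp by simp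
  also have "\<dots> \<le> real (b k p)" using Cp1 Cpp
    by (simp add: divide_le_eq) (metis mult_left_mono mult.right_neutral of_nat_0_le_iff)
  finally have main: "real (card \<T>) * x ^ p \<le> real (b k p)" .
  have "(real (card \<T>) * x ^ p) powr (1 / real p) = real (card \<T>) powr (1 / real p) * (x ^ p) powr (1 / real p)"
    using x0 by (simp add: powr_mult)
  also have "(x ^ p) powr (1 / real p) = x"
    using x0 p by (simp add: powr_realpow[symmetric] powr_powr)
  finally have eq: "(real (card \<T>) * x ^ p) powr (1 / real p) = x * real (card \<T>) powr (1 / real p)"
    by simp
  have "(real (card \<T>) * x ^ p) powr (1 / real p) \<le> real (b k p) powr (1 / real p)"
    using main x0 by (intro powr_mono2) auto
  then show ?thesis using eq unfolding x_def by simp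
qed

end
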